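(* Let $(X_i, A_i, T_i(1), T_i(0), C_i(1), C_i(0), Y_i(1), Y_i(0))$, $i=1,\dots,n$, be i.i.d. copies of $(X, A, T(1), T(0), C(1), C(0), Y(1), Y(0))$, where $X$ is a vector of baseline covariates, $A\in\{0,1\}$ is the treatment indicator, and for $a=0,1$, $Y(a)$ is the potential outcome, $T(a)$ the potential time to a treatment-related intercurrent event, and $C(a)$ the potential time to a treatment-unrelated intercurrent event. The observed quantities are $Y=Y(A)$, $T=T(A)$, $C=C(A)$. Fix a time point $k>0$ and define $$\tau = E[Y(1)1\{T(1)>k\}] - E[Y(0)1\{T(0)>k\}].$$ Assume: (i) $A \perp\!\!\!\perp \{Y(a),T(a),C(a)\}\mid X$ for $a=0,1$, and for some constant $\eta\in(0,0.5)$, $\eta<e(X)<1-\eta$ with probability 1, where $e(X)=\mathrm{pr}(A=1\mid X)$; (ii) $C(a)\perp\!\!\!\perp \{Y(a),T(a)\}\mid X$ for $a=0,1$, and for some constant $\eta_C>0$, $\mathrm{pr}\{C(a)>k\mid X\}>\eta_C$ with probability 1, for $a=0,1$. For $a=0,1$ let $\mu_a(X)=E(Y\mid T\wedge C>k, X, A=a)$, $S_a(t\mid X)=\mathrm{pr}(T>t\mid X,A=a)$ and $G_a(t\mid X)=\mathrm{pr}(C>t\mid X,A=a)$. Then $$\tau = E\{\mu_1(X)S_1(k\mid X) - \mu_0(X)S_0(k\mid X)\}$$ and $$\tau = E\left[\frac{AY1(T\wedge C>k)}{e(X)G_1(k\mid X)} - \frac{(1-A)Y1(T\wedge C>k)}{\{1-e(X)\}G_0(k\mid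 X)}\right].$$
   Context: $a\wedge b$ denotes $\min(a,b)$ and $1(\cdot)$ the indicator function. *)

theory Defs
  imports "HOL-Probability.Probability"
begin

definition sigX :: "'a measure \<Rightarrow> ('a \<Rightarrow> 'x) \<Rightarrow> 'x measure \<Rightarrow> 'a measure" where
  "sigX M X MX = vimage_algebra (space M) X MX"

definition cond_indep ::
  "'a measure \<Rightarrow> 'a measure \<Rightarrow> ('a \<Rightarrow> 'u) \<Rightarrow> 'u measure \<Rightarrow> ('a \<Rightarrow> 'v) \<Rightarrow> 'v measure \<Rightarrow> bool" where
  "cond_indep M F U MU V MV \<longleftrightarrow>
     (\<forall>B\<in>sets MU. \<forall>D\<in>sets MV. AE \<omega> in M.
        real_cond_exp M F (\<lambda>w. indicator B (U w) * indicator D (V w)) \<omega>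
        = real_cond_exp M F (\<lambda>w. indicator B (U w)) \<omega> * real_cond_exp M F (\<lambda>w. indicator D (V w)) \<omega>)"

text \<open>Conditional expectation of f given F and the event E:
  E(f | F, E) = E(f 1_E | F) / E(1_E | F)  (with the convention x/0 = 0).\<close>
definition cond_exp_event :: "'a measure \<Rightarrow> 'a measure \<Rightarrow> 'a set \<Rightarrow> ('a \<Rightarrow> real) \<Rightarrow> 'a \<Rightarrow> real" where
  "cond_exp_event M F E f = (\<lambda>\<omega>. real_cond_exp M F (\<lambda>w. indicator E w * f w) \<omega>
                                  / real_cond_exp M F (indicator E) \<omega>)"

end

theory Submission
  imports Defs
begin


lemma rce_cong_sp:
  assumes "\<And>x. x \<in> space M \<Longrightarrow> f x = g x"
  shows "real_cond_exp M F f = real_cond_exp M F g"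
proof -
  have nn: "nn_cond_exp M F u = nn_cond_exp M F v"
    if uv: "\<And>x. x \<in> space M \<Longrightarrow> u x = v x" for u v :: "'a \<Rightarrow> ennreal"
  proof (cases "u \<in> borel_measurable M")
    case True
    then have "v \<in> borel_measurable M" using measurable_cong[of M u v] uv by auto
    moreover have "density M u = density M v"
      using True calculation uv by (intro density_cong) auto
    ultimately show ?thesis using True unfolding nn_cond_exp_def by simp
  next
    case False
    then have "v \<notin> borel_measurable M" using measurable_cong[of M u v] uv by auto
    then show ?thesis using False unfolding nn_cond_exp_def by simp
  qed
  show ?thesis unfolding real_cond_exp_def
    by (subst nn[of "\<lambda>x. ennreal (f x)" "\<lambda>x. ennreal (g x)"], simp add: assms,
        subst nn[of "\<lambda>x. ennreal (- f x)" "\<lambda>x. ennreal (- g x)"], simp add: assms, rule refl)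
qed

lemma sigX_fms:
  assumes "prob_space M" "X \<in> measurable M MX"
  shows "finite_measure_subalgebra M (sigX M X MX)"
proof -
  interpret prob_space M by fact
  have "subalgebra M (sigX M X MX)"
    unfolding subalgebra_def sigX_def
    using assms(2) by (auto simp: sets_vimage_algebra2 measurable_def)
  then show ?thesis by unfold_locales
qed

lemma (in finite_measure) dens_eq:
  fixes f1 f2 :: "'a \<Rightarrow> real" and V :: "'a \<Rightarrow> 'v"
  assumes [measurable]: "f1 \<in> borel_measurable M" "f2 \<in> borel_measurable M" "V \<in> measurable M MV"
    and i1: "integrable M f1" and i2: "integrable M f2"
    and p1: "AE x in M. 0 \<le> f1 x" and p2: "AE x in M. 0 \<le> f2 x"
    and b1: "AE x in M. f1 x \<le> 1" and b2: "AE x in M. f2 x \<le> 1"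
    and eq: "\<And>D. D \<in> sets MV \<Longrightarrow> (\<integral>x. f1 x * indicator D (V x) \<partial>M) = (\<integral>x. f2 x * indicator D (V x) \<partial>M)"
    and g[measurable]: "g \<in> borel_measurable MV"
  shows "(\<integral>x. f1 x * g (V x) \<partial>M) = (\<integral>x. f2 x * g (V x) \<partial>M)"
proof -
  have ind: "(\<integral>\<^sup>+x. ennreal (f x) * indicator D (V x) \<partial>M) = ennreal (\<integral>x. f x * indicator D (V x) \<partial>M)"
    if [measurable]: "f \<in> borel_measurable M" "D \<in> sets MV" and "AE x in M. 0 \<le> f x" "AE x in M. f x \<le> 1" for f D
  proof -
    have "integrable M (\<lambda>x. f x * indicator D (V x))"
      by (rule Bochner_Integration.integrable_bound[where f="\<lambda>_. 1::real"]) (use that in \<open>auto simp: indicator_def\<close>)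
    then have "(\<integral>\<^sup>+x. ennreal (f x * indicator D (V x)) \<partial>M) = ennreal (\<integral>x. f x * indicator D (V x) \<partial>M)"
      by (intro nn_integral_eq_integral) (use that in \<open>auto simp: indicator_def\<close>)
    moreover have "\<And>x. ennreal (f x * indicator D (V x)) = ennreal (f x) * indicator D (V x)"
      by (simp add: indicator_def)
    ultimately show ?thesis by simp
  qed
  have dd: "distr (density M (\<lambda>x. ennreal (f1 x))) MV V = distr (density M (\<lambda>x. ennreal (f2 x))) MV V"
  proof (rule measure_eqI)
    fix D assume D: "D \<in> sets (distr (density M (\<lambda>x. ennreal (f1 x))) MV V)"
    then have [measurable]: "D \<in> sets MV" by simp
    have e: "emeasure (distr (density M (\<lambda>x. ennreal (f x))) MV V) D = ennreal (\<integral>x. f x * indicator D (V x) \<partial>M)"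
      if [measurable]: "f \<in> borel_measurable M" and "AE x in M. 0 \<le> f x" "AE x in M. f x \<le> 1" for f
    proof -
      have "emeasure (distr (density M (\<lambda>x. ennreal (f x))) MV V) D
          = emeasure (density M (\<lambda>x. ennreal (f x))) (V -` D \<inter> space M)"
        by (subst emeasure_distr) auto
      also have "\<dots> = (\<integral>\<^sup>+x. ennreal (f x) * indicator (V -` D \<inter> space M) x \<partial>M)"
        by (subst emeasure_density) auto
      also have "\<dots> = (\<integral>\<^sup>+x. ennreal (f x) * indicator D (V x) \<partial>M)"
        by (intro nn_integral_cong) (auto simp: indicator_def)
      also have "\<dots> = ennreal (\<integral>x. f x * indicator D (V x) \<partial>M)"
        by (rule ind) (use that in auto)
      finally show ?thesis .
    qed
    show "emeasure (distr (density M (\<lambda>x. ennreal (f1 x))) MV V) D = emeasure (distr (density M (\<lambda>x. ennreal (f2 x))) MV V) D"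
      using e[of f1] e[of f2] eq[of D] p1 p2 b1 b2 by simp
  qed simp
  have "(\<integral>x. f1 x * g (V x) \<partial>M) = integral\<^sup>L (distr (density M (\<lambda>x. ennreal (f1 x))) MV V) g"
    by (subst integral_distr) (auto simp: integral_density p1)
  also have "\<dots> = integral\<^sup>L (distr (density M (\<lambda>x. ennreal (f2 x))) MV V) g" by (simp add: dd)
  also have "\<dots> = (\<integral>x. f2 x * g (V x) \<partial>M)"
    by (subst integral_distr) (auto simp: integral_density p2)
  finally show ?thesis .
qed

lemma (in finite_measure_subalgebra) ci_ext:
  fixes U :: "'a \<Rightarrow> 'u" and V :: "'a \<Rightarrow> 'v" and g :: "'v \<Rightarrow> real"
  assumes [measurable]: "U \<in> measurable M MU" "V \<in> measurable M MV"
    and ci: "cond_indep M F U MU V MV" and B[measurable]: "B \<in> sets MU"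
    and g[measurable]: "g \<in> borel_measurable MV" and ig: "integrable M (\<lambda>w. g (V w))"
  shows "AE \<omega> in M. real_cond_exp M F (\<lambda>w. indicator B (U w) * g (V w)) \<omega>
     = real_cond_exp M F (\<lambda>w. indicator B (U w)) \<omega> * real_cond_exp M F (\<lambda>w. g (V w)) \<omega>"
proof -
  let ?p = "real_cond_exp M F (\<lambda>w. indicator B (U w))"
  let ?c = "real_cond_exp M F (\<lambda>w. g (V w))"
  have iB: "integrable M (\<lambda>w. indicator B (U w) :: real)"
    by (rule Bochner_Integration.integrable_bound[where f="\<lambda>_. 1::real"]) (auto simp: indicator_def)
  have p0: "AE x in M. 0 \<le> ?p x" by (rule real_cond_exp_ge_c[OF iB]) auto
  have p1: "AE x in M. ?p x \<le> 1" by (rule real_cond_exp_le_c[OF iB]) (auto simp: indicator_def)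
  have pb: "AE x in M. \<bar>?p x\<bar> \<le> 1" using p0 p1 by eventually_elim auto
  have bnd: "AE x in M. \<bar>?p x\<bar> * \<bar>h x\<bar> \<le> \<bar>h x\<bar>" for h :: "'a \<Rightarrow> real"
    using pb by eventually_elim (simp add: mult_left_le_one_le)
  have bndA: "AE x in M. \<bar>indicator A x * ?p x\<bar> * \<bar>h x\<bar> \<le> \<bar>h x\<bar>" for h :: "'a \<Rightarrow> real" and A
    using bnd[of h] by eventually_elim (auto simp: indicator_def)
  have ic: "integrable M ?c" by (rule real_cond_exp_int(1)[OF ig])
  have key: "(\<integral>x. (indicator A x * ?p x) * g (V x) \<partial>M) = (\<integral>x. indicator A x * (indicator B (U x) * g (V x)) \<partial>M)"
    if A: "A \<in> sets F" for A
  proof -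
    have AM[measurable]: "A \<in> sets M" using subalg A by (auto simp: subalgebra_def)
    have AF[measurable]: "A \<in> sets F" by (rule A)
    have "(\<integral>x. (indicator A x * indicator B (U x)) * g (V x) \<partial>M) = (\<integral>x. (indicator A x * ?p x) * g (V x) \<partial>M)"
    proof (rule dens_eq[where MV=MV])
      show "integrable M (\<lambda>x. indicator A x * indicator B (U x) :: real)"
        by (rule Bochner_Integration.integrable_bound[where f="\<lambda>_. 1::real"]) (auto simp: indicator_def)
      show "integrable M (\<lambda>x. indicator A x * ?p x)"
        by (rule Bochner_Integration.integrable_bound[where f="\<lambda>_. 1::real"]) (use bndA[of A "\<lambda>_. 1"] in auto)
      show "AE x in M. 0 \<le> indicator A x * ?p x" using p0 by auto
      show "AE x in M. indicator A x * ?p x \<le> 1" using p0 p1 by (auto simp: indicator_def)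
      show "AE x in M. 0 \<le> indicator A x * (indicator B (U x)::real)" by auto
      show "AE x in M. indicator A x * indicator B (U x) \<le> (1::real)" by (auto simp: indicator_def)
    next
      fix D assume D[measurable]: "D \<in> sets MV"
      let ?q = "real_cond_exp M F (\<lambda>w. indicator D (V w))"
      have "(\<integral>x. indicator A x * indicator B (U x) * indicator D (V x) \<partial>M)
          = (\<integral>x. indicator A x * (indicator B (U x) * indicator D (V x)) \<partial>M :: real)"
        by (simp add: mult.assoc)
      also have "\<dots> = (\<integral>x. indicator A x * real_cond_exp M F (\<lambda>x. indicator B (U x) * indicator D (V x)) x \<partial>M)"
      proof -
        have "integrable M (\<lambda>x. indicator A x * (indicator B (U x) * indicator D (V x)) :: real)"
          by (rule Bochner_Integration.integrable_bound[where f="\<lambda>_. 1::real"]) (auto simp: indicator_def)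
        from real_cond_exp_intg(2)[OF this] show ?thesis using AF by (auto simp: borel_measurable_indicator)
      qed
      also have "\<dots> = (\<integral>x. indicator A x * (?p x * ?q x) \<partial>M)"
      proof -
        have "AE x in M. real_cond_exp M F (\<lambda>x. indicator B (U x) * indicator D (V x)) x = ?p x * ?q x"
          using ci B D unfolding cond_indep_def by blast
        then show ?thesis by (intro integral_cong_AE) (auto elim: AE_mp)
      qed
      also have "\<dots> = (\<integral>x. (indicator A x * ?p x) * ?q x \<partial>M)"
        by (simp add: mult.assoc)
      also have "\<dots> = (\<integral>x. (indicator A x * ?p x) * indicator D (V x) \<partial>M)"
      proof -
        have "integrable M (\<lambda>x. (indicator A x * ?p x) * indicator D (V x))"
          by (rule Bochner_Integration.integrable_bound[where f="\<lambda>_. 1::real"])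
             (use bndA[of A "\<lambda>_. 1"] in \<open>auto simp: indicator_def\<close>)
        from real_cond_exp_intg(2)[OF this] show ?thesis using AF by (auto simp: borel_measurable_indicator)
      qed
      finally show "(\<integral>x. indicator A x * indicator B (U x) * indicator D (V x) \<partial>M)
          = (\<integral>x. (indicator A x * ?p x) * indicator D (V x) \<partial>M)" .
    qed (use A in auto)
    then show ?thesis by (simp add: mult.assoc)
  qed
  show ?thesis
  proof (rule real_cond_exp_charact[where g="\<lambda>x. ?p x * ?c x"])
    fix A assume A[measurable]: "A \<in> sets F"
    have AM[measurable]: "A \<in> sets M" using subalg A by (auto simp: subalgebra_def)
    have "(\<integral>x. (indicator A x * ?p x) * ?c x \<partial>M) = (\<integral>x. (indicator A x * ?p x) * g (V x) \<partial>M)"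
    proof -
      have "integrable M (\<lambda>x. (indicator A x * ?p x) * g (V x))"
        by (rule Bochner_Integration.integrable_bound[OF ig]) (use bndA[of A "\<lambda>x. g (V x)"] in \<open>auto simp: abs_mult\<close>)
      from real_cond_exp_intg(2)[OF this] show ?thesis by (auto simp: borel_measurable_indicator)
    qed
    then show "(\<integral>x\<in>A. indicator B (U x) * g (V x) \<partial>M) = (\<integral>x\<in>A. ?p x * ?c x \<partial>M)"
      using key[OF A] by (simp add: set_lebesgue_integral_def mult.assoc)
  next
    show "integrable M (\<lambda>x. indicator B (U x) * g (V x))"
      by (rule Bochner_Integration.integrable_bound[OF ig]) (auto simp: indicator_def)
    show "integrable M (\<lambda>x. ?p x * ?c x)"
      by (rule Bochner_Integration.integrable_bound[OF ic])
         (auto simp: abs_mult bnd)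
  qed simp
qed



lemma (in finite_measure_subalgebra) arm:
  fixes A :: "'a \<Rightarrow> real" and Yp Tp Cp :: "real \<Rightarrow> 'a \<Rightarrow> real" and a k \<eta> \<eta>C :: real
  assumes A_meas[measurable]: "A \<in> borel_measurable M"
    and A_01: "\<forall>\<omega>\<in>space M. A \<omega> \<in> {0,1}" and a: "a \<in> {0,1}"
    and Ym[measurable]: "Yp a \<in> borel_measurable M" and Tm[measurable]: "Tp a \<in> borel_measurable M"
    and Cm[measurable]: "Cp a \<in> borel_measurable M"
    and integ: "integrable M (\<lambda>\<omega>. Yp a \<omega> * indicator {k<..} (Tp a \<omega>))"
    and unc: "cond_indep M F A borel (\<lambda>\<omega>. (Yp a \<omega>, Tp a \<omega>, Cp a \<omega>)) (borel :: (real \<times> real \<times> real) measure)"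
    and cind: "cond_indep M F (Cp a) borel (\<lambda>\<omega>. (Yp a \<omega>, Tp a \<omega>)) (borel :: (real \<times> real) measure)"
    and eta: "0 < \<eta>" and epos: "AE \<omega> in M. \<eta> < real_cond_exp M F (\<lambda>w. indicator {a} (A w)) \<omega>"
    and etaC: "0 < \<eta>C" and gpos: "AE \<omega> in M. \<eta>C < real_cond_exp M F (\<lambda>w. indicator {k<..} (Cp a w)) \<omega>"
    and hF: "h \<in> borel_measurable F" and hAE: "AE \<omega> in M. h \<omega> = real_cond_exp M F (\<lambda>w. indicator {a} (A w)) \<omega>"
  shows "AE \<omega> in M. cond_exp_event M F {\<omega>. min (Tp (A \<omega>) \<omega>) (Cp (A \<omega>) \<omega>) > k \<and> A \<omega> = a} (\<lambda>w. Yp (A w) w) \<omega>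
            * cond_exp_event M F {\<omega>. A \<omega> = a} (\<lambda>w. indicator {k<..} (Tp (A w) w)) \<omega>
          = real_cond_exp M F (\<lambda>\<omega>. Yp a \<omega> * indicator {k<..} (Tp a \<omega>)) \<omega>" (is ?P1)
   and "integrable M (\<lambda>\<omega>. indicator {a} (A \<omega>) * Yp (A \<omega>) \<omega> * indicator {k<..} (min (Tp (A \<omega>) \<omega>) (Cp (A \<omega>) \<omega>))
           / (h \<omega> * cond_exp_event M F {\<omega>. A \<omega> = a} (\<lambda>w. indicator {k<..} (Cp (A w) w)) \<omega>))
     \<and> (\<integral>\<omega>. indicator {a} (A \<omega>) * Yp (A \<omega>) \<omega> * indicator {k<..} (min (Tp (A \<omega>) \<omega>) (Cp (A \<omega>) \<omega>))
           / (h \<omega> * cond_exp_event M F {\<omega>. A \<omega> = a} (\<lambda>w. indicator {k<..} (Cp (A w) w)) \<omega>) \<partial>M)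
       = (\<integral>\<omega>. Yp a \<omega> * indicator {k<..} (Tp a \<omega>) \<partial>M)" (is ?P2)
proof -
  let ?ind = "\<lambda>w. indicator {a} (A w) :: real"
  let ?K = "\<lambda>w. indicator {k<..} (Cp a w) :: real"
  let ?T = "\<lambda>w. indicator {k<..} (Tp a w) :: real"
  let ?Z = "\<lambda>w. Yp a w * indicator {k<..} (Tp a w)"
  let ?ea = "real_cond_exp M F ?ind"
  let ?g = "real_cond_exp M F ?K"
  let ?s = "real_cond_exp M F ?T"
  let ?z = "real_cond_exp M F ?Z"
  have V3[measurable]: "(\<lambda>\<omega>. (Yp a \<omega>, Tp a \<omega>, Cp a \<omega>)) \<in> measurable M (borel :: (real \<times> real \<times> real) measure)"
    unfolding borel_prod[symmetric] by measurable
  have V2[measurable]: "(\<lambda>\<omega>. (Yp a \<omega>, Tp a \<omega>)) \<in> measurable M (borel :: (real \<times> real) measure)"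
    unfolding borel_prod[symmetric] by measurable
  have ce3: "AE \<omega> in M. real_cond_exp M F (\<lambda>w. ?ind w * h w) \<omega> = ?ea \<omega> * real_cond_exp M F h \<omega>"
    if "g \<in> borel_measurable (borel \<Otimes>\<^sub>M borel \<Otimes>\<^sub>M borel)" "integrable M h" "\<And>w. h w = g (Yp a w, Tp a w, Cp a w)"
    for g :: "real \<times> real \<times> real \<Rightarrow> real" and h
  proof -
    from that(1) have gm: "g \<in> borel_measurable borel" unfolding borel_prod .
    have "h = (\<lambda>w. g (Yp a w, Tp a w, Cp a w))" using that(3) by auto
    then show ?thesis using ci_ext[OF A_meas V3 unc _ gm, of "{a}"] that(2) by simp
  qed
  have ce2: "AE \<omega> in M. real_cond_exp M F (\<lambda>w. ?K w * h w) \<omega> = ?g \<omega> * real_cond_exp M F h \<omega>"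
    if "g \<in> borel_measurable (borel \<Otimes>\<^sub>M borel)" "integrable M h" "\<And>w. h w = g (Yp a w, Tp a w)"
    for g :: "real \<times> real \<Rightarrow> real" and h
  proof -
    from that(1) have gm: "g \<in> borel_measurable borel" unfolding borel_prod .
    have "h = (\<lambda>w. g (Yp a w, Tp a w))" using that(3) by auto
    then show ?thesis using ci_ext[OF Cm V2 cind _ gm, of "{k<..}"] that(2) by simp
  qed
  have iZ: "integrable M ?Z" by (rule integ)
  have iKZ: "integrable M (\<lambda>w. ?K w * ?Z w)"
    by (rule Bochner_Integration.integrable_bound[OF iZ]) (auto simp: indicator_def)
  have i1: "integrable M (\<lambda>w. f w)" if "f \<in> borel_measurable M" "\<And>w. \<bar>f w\<bar> \<le> 1" for f :: "'a \<Rightarrow> real"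
    by (rule Bochner_Integration.integrable_bound[where f="\<lambda>_. 1::real"]) (use that in auto)
  have F1: "AE \<omega> in M. real_cond_exp M F (\<lambda>w. ?ind w * (?K w * ?Z w)) \<omega> = ?ea \<omega> * real_cond_exp M F (\<lambda>w. ?K w * ?Z w) \<omega>"
    by (rule ce3[where g="\<lambda>p. indicator {k<..} (snd (snd p)) * (fst p * indicator {k<..} (fst (snd p)))"], measurable)
       (auto intro: iKZ)
  have F2: "AE \<omega> in M. real_cond_exp M F (\<lambda>w. ?ind w * (?K w * ?T w)) \<omega> = ?ea \<omega> * real_cond_exp M F (\<lambda>w. ?K w * ?T w) \<omega>"
    by (rule ce3[where g="\<lambda>p. indicator {k<..} (snd (snd p)) * indicator {k<..} (fst (snd p))"], measurable)
       (auto intro!: i1 simp: indicator_def)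
  have F3: "AE \<omega> in M. real_cond_exp M F (\<lambda>w. ?ind w * ?T w) \<omega> = ?ea \<omega> * ?s \<omega>"
    by (rule ce3[where g="\<lambda>p. indicator {k<..} (fst (snd p))"], measurable)
       (auto intro!: i1 simp: indicator_def)
  have F4: "AE \<omega> in M. real_cond_exp M F (\<lambda>w. ?ind w * ?K w) \<omega> = ?ea \<omega> * ?g \<omega>"
    by (rule ce3[where g="\<lambda>p. indicator {k<..} (snd (snd p))"], measurable)
       (auto intro!: i1 simp: indicator_def)
  have F5: "AE \<omega> in M. real_cond_exp M F (\<lambda>w. ?K w * ?Z w) \<omega> = ?g \<omega> * ?z \<omega>"
    by (rule ce2[where g="\<lambda>p. fst p * indicator {k<..} (snd p)"], measurable) (auto intro: iZ)
  have F6: "AE \<omega> in M. real_cond_exp M F (\<lambda>w. ?K w * ?T w) \<omega> = ?g \<omega> * ?s \<omega>"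
    by (rule ce2[where g="\<lambda>p. indicator {k<..} (snd p)"], measurable) (auto intro!: i1 simp: indicator_def)
  have spF: "space F = space M" using subalg by (simp add: subalgebra_def)
  have F7: "AE \<omega> in M. ?s \<omega> = 0 \<longrightarrow> ?z \<omega> = 0"
  proof -
    define N where "N = {\<omega> \<in> space F. ?s \<omega> = 0}"
    have NF[measurable]: "N \<in> sets F" unfolding N_def by measurable
    have NM[measurable]: "N \<in> sets M" using subalg NF by (auto simp: subalgebra_def)
    have iNT: "integrable M (\<lambda>\<omega>. indicator N \<omega> * ?T \<omega>)"
      by (rule i1) (auto simp: indicator_def)
    have "(\<integral>\<omega>. indicator N \<omega> * ?T \<omega> \<partial>M) = (\<integral>\<omega>. indicator N \<omega> * ?s \<omega> \<partial>M)"
      using real_cond_exp_intg(2)[OF iNT] by (simp add: borel_measurable_indicator)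
    also have "\<dots> = (\<integral>\<omega>. 0 \<partial>M)"
      by (intro Bochner_Integration.integral_cong) (auto simp: N_def indicator_def)
    finally have "(\<integral>\<omega>. indicator N \<omega> * ?T \<omega> \<partial>M) = 0" by simp
    then have "AE \<omega> in M. indicator N \<omega> * ?T \<omega> = 0"
      using integral_nonneg_eq_0_iff_AE[OF iNT] by auto
    then have z0: "AE \<omega> in M. indicator N \<omega> * ?Z \<omega> = 0"
      by eventually_elim (auto simp: indicator_def split: if_splits)
    have iNZ: "integrable M (\<lambda>\<omega>. indicator N \<omega> * ?Z \<omega>)"
      by (rule Bochner_Integration.integrable_bound[OF iZ]) (auto simp: indicator_def)
    have m1: "AE \<omega> in M. real_cond_exp M F (\<lambda>\<omega>. indicator N \<omega> * ?Z \<omega>) \<omega> = indicator N \<omega> * ?z \<omega>"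
      by (rule real_cond_exp_mult) (auto simp: iNZ borel_measurable_indicator)
    have m2: "AE \<omega> in M. real_cond_exp M F (\<lambda>\<omega>. indicator N \<omega> * ?Z \<omega>) \<omega> = real_cond_exp M F (\<lambda>_. 0) \<omega>"
      by (rule real_cond_exp_cong[OF z0]) auto
    have m3: "AE \<omega> in M. real_cond_exp M F (\<lambda>_. 0) \<omega> = 0"
      by (rule real_cond_exp_F_meas) auto
    show ?thesis using m1 m2 m3 AE_space
    proof eventually_elim
      case (elim \<omega>)
      then show ?case using spF by (auto simp: N_def indicator_def split: if_splits)
    qed
  qed
  have muEq: "cond_exp_event M F {\<omega>. min (Tp (A \<omega>) \<omega>) (Cp (A \<omega>) \<omega>) > k \<and> A \<omega> = a} (\<lambda>w. Yp (A w) w)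
      = (\<lambda>\<omega>. real_cond_exp M F (\<lambda>w. ?ind w * (?K w * ?Z w)) \<omega> / real_cond_exp M F (\<lambda>w. ?ind w * (?K w * ?T w)) \<omega>)"
    unfolding cond_exp_event_def
    by (intro ext arg_cong2[where f="(/)"] fun_cong[OF rce_cong_sp])
       (auto simp: indicator_def)
  have SEq: "cond_exp_event M F {\<omega>. A \<omega> = a} (\<lambda>w. indicator {k<..} (Tp (A w) w))
      = (\<lambda>\<omega>. real_cond_exp M F (\<lambda>w. ?ind w * ?T w) \<omega> / ?ea \<omega>)"
    unfolding cond_exp_event_def
    by (intro ext arg_cong2[where f="(/)"] fun_cong[OF rce_cong_sp])
       (auto simp: indicator_def)
  show ?P1 unfolding muEq SEq using F1 F2 F3 F5 F6 F7 epos gpos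
  proof eventually_elim
    case (elim \<omega>)
    then show ?case using eta etaC by (auto simp: field_simps)
  qed
  have GEq: "cond_exp_event M F {\<omega>. A \<omega> = a} (\<lambda>w. indicator {k<..} (Cp (A w) w))
      = (\<lambda>\<omega>. real_cond_exp M F (\<lambda>w. ?ind w * ?K w) \<omega> / ?ea \<omega>)"
    unfolding cond_exp_event_def
    by (intro ext arg_cong2[where f="(/)"] fun_cong[OF rce_cong_sp])
       (auto simp: indicator_def)
  define f where "f = (\<lambda>\<omega>. 1 / (h \<omega> * (real_cond_exp M F (\<lambda>w. ?ind w * ?K w) \<omega> / ?ea \<omega>)))"
  have fF[measurable]: "f \<in> borel_measurable F" unfolding f_def using hF by measurable
  have fM[measurable]: "f \<in> borel_measurable M" by (rule measurable_from_subalg[OF subalg fF])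
  have fAE: "AE \<omega> in M. f \<omega> = 1 / (?ea \<omega> * ?g \<omega>) \<and> 0 < f \<omega> \<and> f \<omega> \<le> 1 / (\<eta> * \<eta>C)"
    using hAE F4 epos gpos
  proof eventually_elim
    case (elim \<omega>)
    then have "f \<omega> = 1 / (?ea \<omega> * ?g \<omega>)" unfolding f_def using eta by simp
    moreover have "\<eta> * \<eta>C \<le> ?ea \<omega> * ?g \<omega>"
      using elim eta etaC by (intro mult_mono) auto
    moreover have "0 < \<eta> * \<eta>C" using eta etaC by simp
    ultimately show ?case by (auto intro!: divide_left_mono)
  qed
  let ?W = "\<lambda>w. ?ind w * (?K w * ?Z w)"
  have iW: "integrable M (\<lambda>\<omega>. f \<omega> * ?W \<omega>)"
  proof (rule Bochner_Integration.integrable_bound[OF integrable_mult_right[OF iZ, of "1 / (\<eta> * \<eta>C)"]])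
    show "AE \<omega> in M. norm (f \<omega> * ?W \<omega>) \<le> norm (1 / (\<eta> * \<eta>C) * ?Z \<omega>)"
      using fAE
    proof eventually_elim
      case (elim \<omega>)
      have fpos: "0 < f \<omega>" using elim by blast
      have "\<bar>f \<omega> * ?W \<omega>\<bar> = f \<omega> * (\<bar>?ind \<omega>\<bar> * (\<bar>?K \<omega>\<bar> * \<bar>?Z \<omega>\<bar>))"
        by (simp only: abs_mult abs_of_pos[OF fpos])
      also have "\<dots> \<le> f \<omega> * \<bar>?Z \<omega>\<bar>"
        using elim by (intro mult_left_mono) (auto simp: indicator_def)
      also have "\<dots> \<le> 1 / (\<eta> * \<eta>C) * \<bar>?Z \<omega>\<bar>"
        using elim by (intro mult_right_mono) auto
      finally show ?case using eta etaC by (simp add: abs_mult)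
    qed
  qed measurable
  have pw: "\<And>\<omega>. \<omega> \<in> space M \<Longrightarrow> indicator {a} (A \<omega>) * Yp (A \<omega>) \<omega> * indicator {k<..} (min (Tp (A \<omega>) \<omega>) (Cp (A \<omega>) \<omega>))
           / (h \<omega> * cond_exp_event M F {\<omega>. A \<omega> = a} (\<lambda>w. indicator {k<..} (Cp (A w) w)) \<omega>) = f \<omega> * ?W \<omega>"
    unfolding GEq f_def by (auto simp: indicator_def)
  have "(\<integral>\<omega>. f \<omega> * ?W \<omega> \<partial>M) = (\<integral>\<omega>. f \<omega> * real_cond_exp M F ?W \<omega> \<partial>M)"
    using real_cond_exp_intg(2)[OF iW] by simp
  also have "\<dots> = (\<integral>\<omega>. ?z \<omega> \<partial>M)"
  proof (rule integral_cong_AE)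
    show "AE \<omega> in M. f \<omega> * real_cond_exp M F ?W \<omega> = ?z \<omega>"
      using fAE F1 F5 epos gpos
    proof eventually_elim
      case (elim \<omega>)
      then show ?case using eta etaC by (auto simp: field_simps)
    qed
  qed measurable
  also have "\<dots> = (\<integral>\<omega>. ?Z \<omega> \<partial>M)" by (rule real_cond_exp_int(2)[OF iZ])
  finally have "(\<integral>\<omega>. f \<omega> * ?W \<omega> \<partial>M) = (\<integral>\<omega>. ?Z \<omega> \<partial>M)" .
  then show ?P2
    using iW by (simp add: Bochner_Integration.integral_cong[OF refl pw] Bochner_Integration.integrable_cong[OF refl pw])
qed



theorem theorem1:
  fixes M :: "'a measure" and MX :: "'x measure"
    and X :: "'a \<Rightarrow> 'x" and A :: "'a \<Rightarrow> real"
    and Yp Tp Cp :: "real \<Rightarrow> 'a \<Rightarrow> real"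
    and k \<eta> \<eta>C :: real
  assumes prob: "prob_space M"
    and X_meas: "X \<in> measurable M MX"
    and A_meas: "A \<in> borel_measurable M"
    and A_01: "\<forall>\<omega>\<in>space M. A \<omega> \<in> {0, 1}"
    and pot_meas: "\<forall>a\<in>{0,1::real}. Yp a \<in> borel_measurable M \<and> Tp a \<in> borel_measurable M
                                   \<and> Cp a \<in> borel_measurable M"
    and integ: "\<forall>a\<in>{0,1::real}. integrable M (\<lambda>\<omega>. Yp a \<omega> * indicator {k<..} (Tp a \<omega>))"
    and k_pos: "k > 0"
    \<comment> \<open>(i) no unmeasured confounding and overlap\<close>
    and unconf: "\<forall>a\<in>{0,1::real}. cond_indep M (sigX M X MX) A borel
                      (\<lambda>\<omega>. (Yp a \<omega>, Tp a \<omega>, Cp a \<omega>)) (borel :: (real \<times> real \<times> real) measure)"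
    and eta: "0 < \<eta>" "\<eta> < 1/2"
    and overlap: "AE \<omega> in M. \<eta> < real_cond_exp M (sigX M X MX) (\<lambda>w. indicator {1} (A w)) \<omega>
                      \<and> real_cond_exp M (sigX M X MX) (\<lambda>w. indicator {1} (A w)) \<omega> < 1 - \<eta>"
    \<comment> \<open>(ii) noninformative treatment-unrelated intercurrent events and positivity\<close>
    and cens_indep: "\<forall>a\<in>{0,1::real}. cond_indep M (sigX M X MX) (Cp a) borel
                      (\<lambda>\<omega>. (Yp a \<omega>, Tp a \<omega>)) (borel :: (real \<times> real) measure)"
    and etaC: "\<eta>C > 0"
    and cens_pos: "\<forall>a\<in>{0,1::real}. AE \<omega> in M.
                      real_cond_exp M (sigX M X MX) (\<lambda>w. indicator {k<..} (Cp a w)) \<omega> > \<eta>C"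
  defines "Y \<equiv> (\<lambda>\<omega>. Yp (A \<omega>) \<omega>)"
    and "T \<equiv> (\<lambda>\<omega>. Tp (A \<omega>) \<omega>)"
    and "C \<equiv> (\<lambda>\<omega>. Cp (A \<omega>) \<omega>)"
    and "e \<equiv> real_cond_exp M (sigX M X MX) (\<lambda>w. indicator {1} (A w))"
    and "\<mu> \<equiv> (\<lambda>a. cond_exp_event M (sigX M X MX) {\<omega>. min (Tp (A \<omega>) \<omega>) (Cp (A \<omega>) \<omega>) > k \<and> A \<omega> = a} (\<lambda>w. Yp (A w) w))"
    and "S \<equiv> (\<lambda>a t. cond_exp_event M (sigX M X MX) {\<omega>. A \<omega> = a} (\<lambda>w. indicator {t<..} (Tp (A w) w)))"
    and "G \<equiv> (\<lambda>a t. cond_exp_event M (sigX M X MX) {\<omega>. A \<omega> = a} (\<lambda>w. indicator {t<..} (Cp (A w) w)))"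
    and "\<tau> \<equiv> (\<integral>\<omega>. Yp 1 \<omega> * indicator {k<..} (Tp 1 \<omega>) \<partial>M)
             - (\<integral>\<omega>. Yp 0 \<omega> * indicator {k<..} (Tp 0 \<omega>) \<partial>M)"
  shows "\<tau> = (\<integral>\<omega>. \<mu> 1 \<omega> * S 1 k \<omega> - \<mu> 0 \<omega> * S 0 k \<omega> \<partial>M)
      \<and> \<tau> = (\<integral>\<omega>. A \<omega> * Y \<omega> * indicator {k<..} (min (T \<omega>) (C \<omega>)) / (e \<omega> * G 1 k \<omega>)
                 - (1 - A \<omega>) * Y \<omega> * indicator {k<..} (min (T \<omega>) (C \<omega>)) / ((1 - e \<omega>) * G 0 k \<omega>) \<partial>M)"

proof -
  let ?F = "sigX M X MX"
  interpret finite_measure_subalgebra M ?F using sigX_fms[OF prob X_meas] .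
  have Am[measurable]: "A \<in> borel_measurable M" by (rule A_meas)
  have ind1: "integrable M (\<lambda>w. indicator {1} (A w) :: real)"
    by (rule Bochner_Integration.integrable_bound[where f="\<lambda>_. 1::real"]) (auto simp: indicator_def)
  have e0: "AE \<omega> in M. real_cond_exp M ?F (\<lambda>w. indicator {0} (A w)) \<omega> = 1 - e \<omega>"
  proof -
    have eq: "real_cond_exp M ?F (\<lambda>w. indicator {0} (A w)) = real_cond_exp M ?F (\<lambda>w. 1 - indicator {1} (A w))"
      by (rule rce_cong_sp) (use A_01 in \<open>auto simp: indicator_def\<close>)
    have d: "AE \<omega> in M. real_cond_exp M ?F (\<lambda>w. 1 - indicator {1} (A w)) \<omega>
        = real_cond_exp M ?F (\<lambda>w. 1) \<omega> - real_cond_exp M ?F (\<lambda>w. indicator {1} (A w)) \<omega>"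
      by (rule real_cond_exp_diff) (auto simp: ind1)
    have o: "AE \<omega> in M. real_cond_exp M ?F (\<lambda>w. 1) \<omega> = 1"
      by (rule real_cond_exp_F_meas) auto
    show ?thesis using d o unfolding e_def eq by eventually_elim simp
  qed
  have arm1: "AE \<omega> in M. \<mu> 1 \<omega> * S 1 k \<omega> = real_cond_exp M ?F (\<lambda>\<omega>. Yp 1 \<omega> * indicator {k<..} (Tp 1 \<omega>)) \<omega>"
     "integrable M (\<lambda>\<omega>. indicator {1} (A \<omega>) * Yp (A \<omega>) \<omega> * indicator {k<..} (min (Tp (A \<omega>) \<omega>) (Cp (A \<omega>) \<omega>))
           / (e \<omega> * G 1 k \<omega>))
     \<and> (\<integral>\<omega>. indicator {1} (A \<omega>) * Yp (A \<omega>) \<omega> * indicator {k<..} (min (Tp (A \<omega>) \<omega>) (Cp (A \<omega>) \<omega>))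
           / (e \<omega> * G 1 k \<omega>) \<partial>M)
       = (\<integral>\<omega>. Yp 1 \<omega> * indicator {k<..} (Tp 1 \<omega>) \<partial>M)"
    unfolding \<mu>_def S_def G_def
    by (rule arm[where \<eta>=\<eta> and \<eta>C=\<eta>C]; (use pot_meas integ unconf cens_indep overlap eta etaC cens_pos A_01 in \<open>auto simp: e_def\<close>)?)+
  have arm0: "AE \<omega> in M. \<mu> 0 \<omega> * S 0 k \<omega> = real_cond_exp M ?F (\<lambda>\<omega>. Yp 0 \<omega> * indicator {k<..} (Tp 0 \<omega>)) \<omega>"
     "integrable M (\<lambda>\<omega>. indicator {0} (A \<omega>) * Yp (A \<omega>) \<omega> * indicator {k<..} (min (Tp (A \<omega>) \<omega>) (Cp (A \<omega>) \<omega>))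
           / ((1 - e \<omega>) * G 0 k \<omega>))
     \<and> (\<integral>\<omega>. indicator {0} (A \<omega>) * Yp (A \<omega>) \<omega> * indicator {k<..} (min (Tp (A \<omega>) \<omega>) (Cp (A \<omega>) \<omega>))
           / ((1 - e \<omega>) * G 0 k \<omega>) \<partial>M)
       = (\<integral>\<omega>. Yp 0 \<omega> * indicator {k<..} (Tp 0 \<omega>) \<partial>M)"
  proof -
    have ep0: "AE \<omega> in M. \<eta> < real_cond_exp M ?F (\<lambda>w. indicator {0} (A w)) \<omega>"
      using e0 overlap unfolding e_def by eventually_elim auto
    have hAE: "AE \<omega> in M. 1 - e \<omega> = real_cond_exp M ?F (\<lambda>w. indicator {0} (A w)) \<omega>"
      using e0 by eventually_elim auto
    have hF: "(\<lambda>\<omega>. 1 - e \<omega>) \<in> borel_measurable ?F" unfolding e_def by measurable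
    show "AE \<omega> in M. \<mu> 0 \<omega> * S 0 k \<omega> = real_cond_exp M ?F (\<lambda>\<omega>. Yp 0 \<omega> * indicator {k<..} (Tp 0 \<omega>)) \<omega>"
      unfolding \<mu>_def S_def
      by (rule arm(1)[where \<eta>=\<eta> and \<eta>C=\<eta>C, OF _ A_01 _ _ _ _ _ _ _ eta(1) ep0 etaC _ hF hAE])
         (use pot_meas integ unconf cens_indep cens_pos in auto)
    show "integrable M (\<lambda>\<omega>. indicator {0} (A \<omega>) * Yp (A \<omega>) \<omega> * indicator {k<..} (min (Tp (A \<omega>) \<omega>) (Cp (A \<omega>) \<omega>))
           / ((1 - e \<omega>) * G 0 k \<omega>))
     \<and> (\<integral>\<omega>. indicator {0} (A \<omega>) * Yp (A \<omega>) \<omega> * indicator {k<..} (min (Tp (A \<omega>) \<omega>) (Cp (A \<omega>) \<omega>))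
           / ((1 - e \<omega>) * G 0 k \<omega>) \<partial>M)
       = (\<integral>\<omega>. Yp 0 \<omega> * indicator {k<..} (Tp 0 \<omega>) \<partial>M)"
      unfolding G_def
      by (rule arm(2)[where \<eta>=\<eta> and \<eta>C=\<eta>C, OF _ A_01 _ _ _ _ _ _ _ eta(1) ep0 etaC _ hF hAE])
         (use pot_meas integ unconf cens_indep cens_pos in auto)
  qed
  have iZ: "integrable M (\<lambda>\<omega>. Yp a \<omega> * indicator {k<..} (Tp a \<omega>))" if "a \<in> {0,1}" for a
    using integ that by auto
  have mS: "(\<lambda>\<omega>. \<mu> a \<omega> * S a k \<omega>) \<in> borel_measurable M" for a
    unfolding \<mu>_def S_def cond_exp_event_def by measurable
  have part: "integrable M (\<lambda>\<omega>. \<mu> a \<omega> * S a k \<omega>) \<and>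
      (\<integral>\<omega>. \<mu> a \<omega> * S a k \<omega> \<partial>M) = (\<integral>\<omega>. Yp a \<omega> * indicator {k<..} (Tp a \<omega>) \<partial>M)"
    if a: "a \<in> {0,1}" and ae: "AE \<omega> in M. \<mu> a \<omega> * S a k \<omega> = real_cond_exp M ?F (\<lambda>\<omega>. Yp a \<omega> * indicator {k<..} (Tp a \<omega>)) \<omega>" for a
  proof
    show "integrable M (\<lambda>\<omega>. \<mu> a \<omega> * S a k \<omega>)"
      using integrable_cong_AE[OF mS _ ae] real_cond_exp_int(1)[OF iZ[OF a]] by simp
    have "(\<integral>\<omega>. \<mu> a \<omega> * S a k \<omega> \<partial>M) = (\<integral>\<omega>. real_cond_exp M ?F (\<lambda>\<omega>. Yp a \<omega> * indicator {k<..} (Tp a \<omega>)) \<omega> \<partial>M)"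
      by (rule integral_cong_AE[OF mS _ ae]) simp
    then show "(\<integral>\<omega>. \<mu> a \<omega> * S a k \<omega> \<partial>M) = (\<integral>\<omega>. Yp a \<omega> * indicator {k<..} (Tp a \<omega>) \<partial>M)"
      using real_cond_exp_int(2)[OF iZ[OF a]] by simp
  qed
  note p1 = part[OF _ arm1(1)] and p0 = part[OF _ arm0(1)]
  show ?thesis
  proof
    show "\<tau> = (\<integral>\<omega>. \<mu> 1 \<omega> * S 1 k \<omega> - \<mu> 0 \<omega> * S 0 k \<omega> \<partial>M)"
      unfolding \<tau>_def using p1 p0 by (subst Bochner_Integration.integral_diff) auto
  next
    have pw: "\<And>\<omega>. \<omega> \<in> space M \<Longrightarrow>
        A \<omega> * Y \<omega> * indicator {k<..} (min (T \<omega>) (C \<omega>)) / (e \<omega> * G 1 k \<omega>)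
        - (1 - A \<omega>) * Y \<omega> * indicator {k<..} (min (T \<omega>) (C \<omega>)) / ((1 - e \<omega>) * G 0 k \<omega>)
      = indicator {1} (A \<omega>) * Yp (A \<omega>) \<omega> * indicator {k<..} (min (Tp (A \<omega>) \<omega>) (Cp (A \<omega>) \<omega>)) / (e \<omega> * G 1 k \<omega>)
        - indicator {0} (A \<omega>) * Yp (A \<omega>) \<omega> * indicator {k<..} (min (Tp (A \<omega>) \<omega>) (Cp (A \<omega>) \<omega>)) / ((1 - e \<omega>) * G 0 k \<omega>)"
    proof -
      fix \<omega> assume "\<omega> \<in> space M"
      then have "A \<omega> = 0 \<or> A \<omega> = 1" using A_01 by auto
      then show "?thesis \<omega>" unfolding Y_def T_def C_def by (auto simp: indicator_def)
    qed
    have "(\<integral>\<omega>. A \<omega> * Y \<omega> * indicator {k<..} (min (T \<omega>) (C \<omega>)) / (e \<omega> * G 1 k \<omega>)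
                 - (1 - A \<omega>) * Y \<omega> * indicator {k<..} (min (T \<omega>) (C \<omega>)) / ((1 - e \<omega>) * G 0 k \<omega>) \<partial>M)
      = (\<integral>\<omega>. indicator {1} (A \<omega>) * Yp (A \<omega>) \<omega> * indicator {k<..} (min (Tp (A \<omega>) \<omega>) (Cp (A \<omega>) \<omega>)) / (e \<omega> * G 1 k \<omega>)
        - indicator {0} (A \<omega>) * Yp (A \<omega>) \<omega> * indicator {k<..} (min (Tp (A \<omega>) \<omega>) (Cp (A \<omega>) \<omega>)) / ((1 - e \<omega>) * G 0 k \<omega>) \<partial>M)"
      by (rule Bochner_Integration.integral_cong[OF refl pw])
    also have "\<dots> = \<tau>"
      unfolding \<tau>_def using arm1(2) arm0(2) by (subst Bochner_Integration.integral_diff) auto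
    finally show "\<tau> = (\<integral>\<omega>. A \<omega> * Y \<omega> * indicator {k<..} (min (T \<omega>) (C \<omega>)) / (e \<omega> * G 1 k \<omega>)
                 - (1 - A \<omega>) * Y \<omega> * indicator {k<..} (min (T \<omega>) (C \<omega>)) / ((1 - e \<omega>) * G 0 k \<omega>) \<partial>M)"
      by simp
  qed
qed

end
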